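(* Let $0<\epsilon<1/2$, $C=\lceil\epsilon^{-1}\rceil$ and $c\in\{0,\dots,C-1\}$. Let $G$ be a graph with edge weights $w(e)\ge1$, and let $G^c$, its levels and the combined matching $\hat{M}^c$ be as defined below, where for every level $l$ the matching $M^c_l$ is a $(1+\epsilon)$-approximate maximum weight matching of the subgraph of $G^c$ consisting of its level-$l$ edges. Let $\mathcal{M}^c$ be a maximum weight matching of $G^c$. Then $$(1+7\epsilon)\,w(\hat{M}^c)\ge w(\mathcal{M}^c).$$
   Context: An edge $e$ is in bucket $b\in\mathbb{Z}$ if $w(e)\in[\epsilon^{-b},\epsilon^{-(b+1)})$. The graph $G^c$ is obtained from $G$ by removing all edges whose bucket $b$ satisfies $b\equiv c\pmod C$. Level $l$ of copy $c$ consists of the edges of $G^c$ in buckets $lC+c+1,\dots,(l+1)C+c-1$. The combined matching $\hat{M}^c$ is formed greedily: start from $\emptyset$; for $l$ from the maximum level down to the minimum, add the (remaining) edges of $M^c_l$, and for each $(u,v)\in M^c_l$ remove all edges incident to $u$ or $v$ from every $M^c_{l'}$ with $l'<l$. For an edge set $S$, $w(S)=\sum_{e\in S}w(e)$; a matching $M$ of $H$ is a $(1+\epsilon)$-approximate maximum weight matching if $w(M)\ge\frac{1}{1+\epsilon}$ times the maximum weight of a matching of $H$. *)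

theory Defs
  imports Complex_Main
begin

definition graph :: "'v set set \<Rightarrow> bool" where
  "graph E \<longleftrightarrow> finite E \<and> (\<forall>e\<in>E. card e = 2)"

definition wt :: "('v set \<Rightarrow> real) \<Rightarrow> 'v set set \<Rightarrow> real" where
  "wt w S = (\<Sum>e\<in>S. w e)"

definition matching :: "'v set set \<Rightarrow> 'v set set \<Rightarrow> bool" where
  "matching H M \<longleftrightarrow> M \<subseteq> H \<and> (\<forall>e\<in>M. \<forall>f\<in>M. e \<noteq> f \<longrightarrow> e \<inter> f = {})"

definition max_weight_matching :: "('v set \<Rightarrow> real) \<Rightarrow> 'v set set \<Rightarrow> 'v set set \<Rightarrow> bool" where
  "max_weight_matching w H M \<longleftrightarrow> matching H M \<and> (\<forall>M'. matching H M' \<longrightarrow> wt w M' \<le> wt w M)"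

definition approx_max_weight_matching ::
  "real \<Rightarrow> ('v set \<Rightarrow> real) \<Rightarrow> 'v set set \<Rightarrow> 'v set set \<Rightarrow> bool" where
  "approx_max_weight_matching eps w H M \<longleftrightarrow> matching H M \<and>
     (\<exists>Mopt. max_weight_matching w H Mopt \<and> wt w M \<ge> wt w Mopt / (1 + eps))"

definition in_bucket :: "real \<Rightarrow> real \<Rightarrow> int \<Rightarrow> bool" where
  "in_bucket eps x b \<longleftrightarrow> eps powr (- real_of_int b) \<le> x \<and> x < eps powr (- real_of_int (b + 1))"

definition bucket :: "real \<Rightarrow> real \<Rightarrow> int" where
  "bucket eps x = (THE b. in_bucket eps x b)"

definition copy_edges :: "real \<Rightarrow> int \<Rightarrow> int \<Rightarrow> ('v set \<Rightarrow> real) \<Rightarrow> 'v set set \<Rightarrow> 'v set set" where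
  "copy_edges eps C c w E = {e \<in> E. bucket eps (w e) mod C \<noteq> c mod C}"

definition level_edges :: "real \<Rightarrow> int \<Rightarrow> int \<Rightarrow> ('v set \<Rightarrow> real) \<Rightarrow> 'v set set \<Rightarrow> int \<Rightarrow> 'v set set" where
  "level_edges eps C c w E l = {e \<in> copy_edges eps C c w E.
      l * C + c + 1 \<le> bucket eps (w e) \<and> bucket eps (w e) \<le> (l + 1) * C + c - 1}"

definition level_of :: "real \<Rightarrow> int \<Rightarrow> int \<Rightarrow> ('v set \<Rightarrow> real) \<Rightarrow> 'v set \<Rightarrow> int" where
  "level_of eps C c w e = (bucket eps (w e) - c - 1) div C"

definition greedy_step :: "(int \<Rightarrow> 'v set set) \<Rightarrow> 'v set set \<Rightarrow> int \<Rightarrow> 'v set set" where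
  "greedy_step M S l = S \<union> {e \<in> M l. \<forall>f\<in>S. e \<inter> f = {}}"

definition combined_matching ::
  "real \<Rightarrow> int \<Rightarrow> int \<Rightarrow> ('v set \<Rightarrow> real) \<Rightarrow> 'v set set \<Rightarrow> (int \<Rightarrow> 'v set set) \<Rightarrow> 'v set set" where
  "combined_matching eps C c w E M =
     (let Ls = level_of eps C c w ` copy_edges eps C c w E
      in foldl (greedy_step M) {} (rev [Min Ls..Max Ls]))"

end

theory Submission imports Defs begin

definition coef :: "real \<Rightarrow> int \<Rightarrow> real" where
  "coef eps n = 1 + 2*eps*(1 - eps powr real_of_int n)/(1-eps)"

lemma coef_step:
  assumes "0<eps" "eps<1"
  shows "coef eps (n - 1) + 2 * eps powr real_of_int n = coef eps n"
proof -
  have "eps powr real_of_int n = eps powr real_of_int (n-1) * eps"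
  proof -
    have "eps powr real_of_int n = eps powr (real_of_int n - 1 + 1)" by simp
    also have "\<dots> = eps powr (real_of_int n - 1) * eps" using assms by (simp only: powr_add) simp
    finally show ?thesis by simp
  qed
  then show ?thesis using assms unfolding coef_def by (simp add: field_simps)
qed

lemma coef_mono:
  assumes "0<eps" "eps<1" "n \<le> m"
  shows "coef eps n \<le> coef eps m"
proof -
  have "eps powr real_of_int m \<le> eps powr real_of_int n"
    using assms by (intro powr_mono') auto
  then show ?thesis using assms unfolding coef_def by (simp add: divide_right_mono)
qed

lemma coef_ge1:
  assumes "0<eps" "eps<1" "0 \<le> n"
  shows "1 \<le> coef eps n"
proof -
  have "eps powr real_of_int n \<le> eps powr 0"
    using assms by (intro powr_mono') auto
  then show ?thesis using assms unfolding coef_def by simp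
qed

lemma coef_le:
  assumes "0<eps" "eps<1"
  shows "coef eps n \<le> 1 + 2*eps/(1-eps)"
  using assms unfolding coef_def by (simp add: divide_right_mono)

lemma card_touch:
  assumes disj: "\<And>e f. e\<in>Mx \<Longrightarrow> f\<in>Mx \<Longrightarrow> e\<noteq>f \<Longrightarrow> e\<inter>f={}"
    and "card f = 2"
  shows "card {g\<in>Mx. g \<inter> f \<noteq> {}} \<le> 2"
proof -
  let ?G = "{g\<in>Mx. g \<inter> f \<noteq> {}}"
  let ?h = "\<lambda>g. SOME v. v \<in> g \<inter> f"
  have h: "?h g \<in> g \<inter> f" if "g \<in> ?G" for g
  proof -
    from that obtain v where "v \<in> g \<inter> f" by auto
    then show ?thesis by (rule someI)
  qed
  have "inj_on ?h ?G"
  proof (rule inj_onI)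
    fix g1 g2 assume "g1 \<in> ?G" "g2 \<in> ?G" "?h g1 = ?h g2"
    then have "?h g1 \<in> g1 \<inter> g2" using h[of g1] h[of g2] by simp
    then have "g1 \<inter> g2 \<noteq> {}" by blast
    moreover have "g1 \<in> Mx" "g2 \<in> Mx" using \<open>g1 \<in> ?G\<close> \<open>g2 \<in> ?G\<close> by auto
    ultimately show "g1 = g2" using disj by blast
  qed
  moreover have "?h ` ?G \<subseteq> f" using h by blast
  moreover have "finite f" using assms(2) by (metis card.infinite zero_neq_numeral)
  ultimately have "card ?G \<le> card f" by (meson card_inj_on_le)
  then show ?thesis using assms(2) by simp
qed

lemma charge:
  fixes w :: "'v set \<Rightarrow> real"
  assumes finS: "finite S" and finM: "finite Mx"
    and disj: "\<And>e f. e\<in>Mx \<Longrightarrow> f\<in>Mx \<Longrightarrow> e\<noteq>f \<Longrightarrow> e\<inter>f={}"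
    and wM: "\<And>g. g \<in> Mx \<Longrightarrow> 0 \<le> w g"
    and Sprop: "\<And>f. f\<in>S \<Longrightarrow> card f = 2 \<and> 0 \<le> w f \<and> (\<forall>g\<in>Mx. w g \<le> K f * w f)"
    and Kpos: "\<And>f. f\<in>S \<Longrightarrow> 0 \<le> K f"
  shows "wt w {g\<in>Mx. \<exists>f\<in>S. g \<inter> f \<noteq> {}} \<le> (\<Sum>f\<in>S. 2 * K f * w f)"
proof -
  let ?B = "{g\<in>Mx. \<exists>f\<in>S. g \<inter> f \<noteq> {}}"
  have finB: "finite ?B" using finM by simp
  have "wt w ?B \<le> (\<Sum>g\<in>?B. \<Sum>f\<in>S. if g \<inter> f \<noteq> {} then w g else 0)"
    unfolding wt_def
  proof (rule sum_mono)
    fix g assume g: "g \<in> ?B"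
    then obtain f0 where f0: "f0 \<in> S" "g \<inter> f0 \<noteq> {}" by blast
    have "w g = (if g \<inter> f0 \<noteq> {} then w g else 0)" using f0 by simp
    also have "\<dots> \<le> (\<Sum>f\<in>S. if g \<inter> f \<noteq> {} then w g else 0)"
      by (rule member_le_sum) (use f0 finS wM g in auto)
    finally show "w g \<le> (\<Sum>f\<in>S. if g \<inter> f \<noteq> {} then w g else 0)" .
  qed
  also have "\<dots> = (\<Sum>f\<in>S. \<Sum>g\<in>?B. if g \<inter> f \<noteq> {} then w g else 0)"
    by (rule sum.swap)
  also have "\<dots> \<le> (\<Sum>f\<in>S. 2 * K f * w f)"
  proof (rule sum_mono)
    fix f assume f: "f \<in> S"
    have "(\<Sum>g\<in>?B. if g \<inter> f \<noteq> {} then w g else 0) = (\<Sum>g\<in>{g\<in>?B. g \<inter> f \<noteq> {}}. w g)"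
      by (rule sum.inter_filter[OF finB, symmetric])
    also have "{g\<in>?B. g \<inter> f \<noteq> {}} = {g\<in>Mx. g \<inter> f \<noteq> {}}" using f by blast
    also have "(\<Sum>g\<in>{g\<in>Mx. g \<inter> f \<noteq> {}}. w g) \<le> of_nat (card {g\<in>Mx. g \<inter> f \<noteq> {}}) * (K f * w f)"
      by (rule sum_bounded_above) (use Sprop f in auto)
    also have "\<dots> \<le> 2 * (K f * w f)"
      apply (rule mult_right_mono)
      using card_touch[of Mx f, OF disj] Sprop[OF f] apply simp
      using Kpos[OF f] Sprop[OF f] by simp
    finally show "(\<Sum>g\<in>?B. if g \<inter> f \<noteq> {} then w g else 0) \<le> 2 * K f * w f" by simp
  qed
  finally show ?thesis .
qed

lemma fold_bound:
  fixes eps :: real and lev :: "'v set \<Rightarrow> int" and M :: "int \<Rightarrow> 'v set set" and w :: "'v set \<Rightarrow> real"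
  assumes eps: "0<eps" "eps<1"
    and fin: "\<And>l. finite (M l)"
    and disj: "\<And>l e f. e\<in>M l \<Longrightarrow> f\<in>M l \<Longrightarrow> e\<noteq>f \<Longrightarrow> e\<inter>f={}"
    and card2: "\<And>l e. e\<in>M l \<Longrightarrow> card e = 2"
    and lev: "\<And>l e. e\<in>M l \<Longrightarrow> lev e = l"
    and wpos: "\<And>l e. e\<in>M l \<Longrightarrow> 0 \<le> w e"
    and wb: "\<And>l l' g f. l<l' \<Longrightarrow> g\<in>M l \<Longrightarrow> f\<in>M l' \<Longrightarrow> w g \<le> eps powr (real_of_int (l'-l)) * w f"
    and sorted: "sorted_wrt (>) xs"
  shows "finite (foldl (greedy_step M) {} xs) \<and> foldl (greedy_step M) {} xs \<subseteq> \<Union> (M ` set xs) \<and>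
     (\<forall>l. (\<forall>k\<in>set xs. l \<le> k) \<longrightarrow>
        (\<Sum>k\<in>set xs. wt w (M k)) \<le> (\<Sum>f\<in>foldl (greedy_step M) {} xs. coef eps (lev f - l) * w f))"
  using sorted
proof (induction xs rule: rev_induct)
  case Nil
  then show ?case by simp
next
  case (snoc x xs)
  define S where "S = foldl (greedy_step M) {} xs"
  define A where "A = {e \<in> M x. \<forall>f\<in>S. e \<inter> f = {}}"
  have srt: "sorted_wrt (>) xs" and gt: "\<And>k. k \<in> set xs \<Longrightarrow> x < k"
    using snoc.prems by (auto simp: sorted_wrt_append)
  have IH: "finite S" "S \<subseteq> \<Union> (M ` set xs)"
    "\<And>l. (\<forall>k\<in>set xs. l \<le> k) \<Longrightarrow> (\<Sum>k\<in>set xs. wt w (M k)) \<le> (\<Sum>f\<in>S. coef eps (lev f - l) * w f)"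
    using snoc.IH[OF srt] unfolding S_def by auto
  have S': "foldl (greedy_step M) {} (xs @ [x]) = S \<union> A"
    by (simp add: S_def A_def greedy_step_def)
  have xnot: "x \<notin> set xs" using gt by blast
  have finA: "finite A" using fin[of x] unfolding A_def by simp
  have Asub: "A \<subseteq> M x" unfolding A_def by blast
  have SA: "S \<inter> A = {}"
  proof (rule ccontr)
    assume "S \<inter> A \<noteq> {}"
    then obtain e where "e \<in> S" "e \<in> A" by blast
    then have "e = {}" "card e = 2" using card2 Asub unfolding A_def by auto
    then show False by simp
  qed
  have Sinfo: "\<And>f. f \<in> S \<Longrightarrow> f \<in> M (lev f) \<and> x < lev f"
    using IH(2) lev gt by fastforce
  have main: "(\<Sum>k\<in>set (xs@[x]). wt w (M k)) \<le> (\<Sum>f\<in>S \<union> A. coef eps (lev f - l) * w f)"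
    if l: "\<forall>k\<in>set (xs@[x]). l \<le> k" for l
  proof -
    have lx: "l \<le> x" using l by simp
    have "(\<Sum>k\<in>set (xs@[x]). wt w (M k)) = (\<Sum>k\<in>set xs. wt w (M k)) + wt w (M x)"
      using xnot by simp
    also have "wt w (M x) = wt w A + wt w {g\<in>M x. \<exists>f\<in>S. g \<inter> f \<noteq> {}}"
    proof -
      have "M x = A \<union> {g\<in>M x. \<exists>f\<in>S. g \<inter> f \<noteq> {}}" unfolding A_def by blast
      moreover have "A \<inter> {g\<in>M x. \<exists>f\<in>S. g \<inter> f \<noteq> {}} = {}" unfolding A_def by blast
      ultimately show ?thesis unfolding wt_def using fin[of x]
        by (metis (no_types, lifting) finite_Un sum.union_disjoint)
    qed
    also have "wt w {g\<in>M x. \<exists>f\<in>S. g \<inter> f \<noteq> {}} \<le> (\<Sum>f\<in>S. 2 * eps powr real_of_int (lev f - x) * w f)"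
    proof (rule charge[OF IH(1) fin[of x]])
      show "\<And>e f. e \<in> M x \<Longrightarrow> f \<in> M x \<Longrightarrow> e \<noteq> f \<Longrightarrow> e \<inter> f = {}" using disj by blast
      show "\<And>g. g \<in> M x \<Longrightarrow> 0 \<le> w g" using wpos by blast
      show "\<And>f. f \<in> S \<Longrightarrow> 0 \<le> eps powr real_of_int (lev f - x)" by simp
      show "\<And>f. f \<in> S \<Longrightarrow> card f = 2 \<and> 0 \<le> w f \<and> (\<forall>g\<in>M x. w g \<le> eps powr real_of_int (lev f - x) * w f)"
        using Sinfo card2 wpos wb by blast
    qed
    also have "(\<Sum>k\<in>set xs. wt w (M k)) \<le> (\<Sum>f\<in>S. coef eps (lev f - (x+1)) * w f)"
      using IH(3)[of "x+1"] gt by force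
    finally have "(\<Sum>k\<in>set (xs@[x]). wt w (M k)) \<le>
       (\<Sum>f\<in>S. coef eps (lev f - (x+1)) * w f) + (\<Sum>f\<in>S. 2 * eps powr real_of_int (lev f - x) * w f) + wt w A"
      by linarith
    also have "(\<Sum>f\<in>S. coef eps (lev f - (x+1)) * w f) + (\<Sum>f\<in>S. 2 * eps powr real_of_int (lev f - x) * w f)
        = (\<Sum>f\<in>S. coef eps (lev f - x) * w f)"
    proof -
      have "(\<Sum>f\<in>S. coef eps (lev f - (x+1)) * w f) + (\<Sum>f\<in>S. 2 * eps powr real_of_int (lev f - x) * w f)
          = (\<Sum>f\<in>S. (coef eps ((lev f - x) - 1) + 2 * eps powr real_of_int (lev f - x)) * w f)"
        by (simp add: sum.distrib[symmetric] algebra_simps)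
      also have "\<dots> = (\<Sum>f\<in>S. coef eps (lev f - x) * w f)"
        using coef_step[OF eps] by (intro sum.cong) presburger+
      finally show ?thesis .
    qed
    also have "(\<Sum>f\<in>S. coef eps (lev f - x) * w f) \<le> (\<Sum>f\<in>S. coef eps (lev f - l) * w f)"
    proof (rule sum_mono)
      fix f assume f: "f \<in> S"
      show "coef eps (lev f - x) * w f \<le> coef eps (lev f - l) * w f"
        by (rule mult_right_mono) (use coef_mono[OF eps] lx Sinfo[OF f] wpos in auto)
    qed
    also have "wt w A \<le> (\<Sum>f\<in>A. coef eps (lev f - l) * w f)"
      unfolding wt_def
    proof (rule sum_mono)
      fix f assume f: "f \<in> A"
      then have "lev f = x" "0 \<le> w f" using Asub lev wpos by auto
      then have "1 \<le> coef eps (lev f - l)" using coef_ge1[OF eps] lx by simp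
      then show "w f \<le> coef eps (lev f - l) * w f" using \<open>0 \<le> w f\<close>
        using mult_right_mono[of 1 "coef eps (lev f - l)" "w f"] by simp
    qed
    also have "(\<Sum>f\<in>S. coef eps (lev f - l) * w f) + (\<Sum>f\<in>A. coef eps (lev f - l) * w f)
        = (\<Sum>f\<in>S \<union> A. coef eps (lev f - l) * w f)"
      by (rule sum.union_disjoint[OF IH(1) finA SA, symmetric])
    finally show ?thesis by simp
  qed
  show ?case unfolding S' using IH(1,2) finA Asub main by auto
qed

lemma in_bucket_iff:
  assumes "0<eps" "eps<1" "0<x"
  shows "in_bucket eps x b \<longleftrightarrow> b = \<lfloor>ln x / (- ln eps)\<rfloor>"
proof -
  define a where "a = - ln eps"
  have a: "0 < a" using assms unfolding a_def by simp
  have p: "\<And>r. eps powr r = exp (- r * a)" using assms unfolding a_def powr_def by simp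
  have "in_bucket eps x b \<longleftrightarrow> exp (real_of_int b * a) \<le> x \<and> x < exp ((real_of_int b + 1) * a)"
    unfolding in_bucket_def p by (simp add: algebra_simps)
  also have "\<dots> \<longleftrightarrow> real_of_int b * a \<le> ln x \<and> ln x < (real_of_int b + 1) * a"
    using assms by (metis exp_le_cancel_iff exp_less_cancel_iff exp_ln)
  also have "\<dots> \<longleftrightarrow> real_of_int b \<le> ln x / a \<and> ln x / a < real_of_int b + 1"
    using a by (simp add: pos_le_divide_eq pos_divide_less_eq)
  also have "\<dots> \<longleftrightarrow> b = \<lfloor>ln x / a\<rfloor>" by (metis floor_eq_iff)
  finally show ?thesis unfolding a_def .
qed

lemma bucket_in:
  assumes "0<eps" "eps<1" "0<x"
  shows "in_bucket eps x (bucket eps x)"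
proof -
  have "bucket eps x = \<lfloor>ln x / (- ln eps)\<rfloor>"
    unfolding bucket_def using in_bucket_iff[OF assms] by (intro the_equality) auto
  then show ?thesis using in_bucket_iff[OF assms] by simp
qed

theorem lemma10:
  fixes eps :: real and C c :: int and E :: "'v set set" and w :: "'v set \<Rightarrow> real"
    and M :: "int \<Rightarrow> 'v set set" and Mopt :: "'v set set"
  assumes "0 < eps" "eps < 1/2"
    and "C = \<lceil>1 / eps\<rceil>"
    and "0 \<le> c" "c < C"
    and "graph E"
    and "\<forall>e\<in>E. w e \<ge> 1"
    and "\<forall>l. approx_max_weight_matching eps w (level_edges eps C c w E l) (M l)"
    and "max_weight_matching w (copy_edges eps C c w E) Mopt"
  shows "(1 + 7 * eps) * wt w (combined_matching eps C c w E M) \<ge> wt w Mopt"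
proof -
  note epsp = assms(1) and epsh = assms(2)
  have eps1: "0 < eps" "eps < 1" using assms by auto
  have C1: "1 \<le> C" using assms(3,4,5) by linarith
  have finE: "finite E" and card2E: "\<And>e. e \<in> E \<Longrightarrow> card e = 2"
    using assms(6) unfolding graph_def by auto
  have wE: "\<And>e. e \<in> E \<Longrightarrow> 1 \<le> w e" using assms(7) by auto
  define lev where "lev = level_of eps C c w"
  define Ce where "Ce = copy_edges eps C c w E"
  define LE where "LE = level_edges eps C c w E"
  have CeE: "Ce \<subseteq> E" unfolding Ce_def copy_edges_def by auto
  have LECe: "LE l \<subseteq> Ce" for l unfolding LE_def level_edges_def Ce_def by auto
  have bin: "\<And>e. e \<in> E \<Longrightarrow> in_bucket eps (w e) (bucket eps (w e))"
  proof -
    fix e assume "e \<in> E"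
    then have "0 < w e" using wE[of e] by simp
    then show "in_bucket eps (w e) (bucket eps (w e))" by (rule bucket_in[OF eps1])
  qed
  have LE_lev: "lev e = l" if "e \<in> LE l" for e l
  proof -
    define b where "b = bucket eps (w e)"
    have h: "l * C + c + 1 \<le> b" "b \<le> (l + 1) * C + c - 1"
      using that unfolding LE_def level_edges_def b_def by auto
    define r' where "r' = b - c - 1 - l * C"
    have e1: "b - c - 1 = r' + l * C" by (simp add: r'_def)
    have "0 \<le> r'" "r' < C" using h by (auto simp: algebra_simps r'_def)
    then have "r' div C = 0" by simp
    then have "(b - c - 1) div C = l" unfolding e1 using C1 by simp
    then show ?thesis unfolding lev_def level_of_def b_def .
  qed
  have Ce_LE: "e \<in> LE (lev e)" if "e \<in> Ce" for e
  proof -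
    define b where "b = bucket eps (w e)"
    define l where "l = (b - c - 1) div C"
    define r where "r = (b - c - 1) mod C"
    have bm: "b mod C \<noteq> c mod C" using that unfolding Ce_def copy_edges_def b_def by auto
    have br: "b = l * C + c + 1 + r" unfolding l_def r_def by (simp add: algebra_simps)
    have r: "0 \<le> r" "r < C" unfolding r_def using C1 by auto
    have "r \<noteq> C - 1"
    proof
      assume "r = C - 1"
      then have "b = (l + 1) * C + c" using br by (simp add: algebra_simps)
      then have "b mod C = c mod C" by (metis mod_mult_self3 mult.commute)
      then show False using bm by simp
    qed
    then have "l * C + c + 1 \<le> b" "b \<le> (l + 1) * C + c - 1" using br r by (auto simp: algebra_simps)
    then show ?thesis using that unfolding LE_def level_edges_def lev_def level_of_def b_def l_def Ce_def
      by auto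
  qed
  have apx: "\<And>l. approx_max_weight_matching eps w (LE l) (M l)" using assms(8) unfolding LE_def by auto
  have MLE: "M l \<subseteq> LE l" for l using apx[of l] unfolding approx_max_weight_matching_def matching_def by auto
  have ME: "M l \<subseteq> E" for l using MLE LECe CeE by blast
  have finM: "finite (M l)" for l using ME finE finite_subset by blast
  have disjM: "\<And>l e f. e\<in>M l \<Longrightarrow> f\<in>M l \<Longrightarrow> e\<noteq>f \<Longrightarrow> e\<inter>f={}"
    using apx unfolding approx_max_weight_matching_def matching_def by blast
  have wb: "w g \<le> eps powr (real_of_int (l'-l)) * w f"
    if ll: "l<l'" and g: "g\<in>M l" and f: "f\<in>M l'" for l l' g f
  proof -
    define bg where "bg = bucket eps (w g)"
    define bf where "bf = bucket eps (w f)"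
    have hg: "bg \<le> (l + 1) * C + c - 1" using MLE g unfolding LE_def level_edges_def bg_def by auto
    have hf: "l' * C + c + 1 \<le> bf" using MLE f unfolding LE_def level_edges_def bf_def by auto
    have "(l' - l - 1) * 1 \<le> (l' - l - 1) * C" using ll C1 by (intro mult_left_mono) auto
    then have ib: "l' - l \<le> bf - bg - 1" using hg hf by (simp add: algebra_simps)
    have wg: "w g < eps powr (- real_of_int (bg + 1))" using bin[of g] ME g unfolding in_bucket_def bg_def by auto
    have wf: "eps powr (- real_of_int bf) \<le> w f" using bin[of f] ME f unfolding in_bucket_def bf_def by auto
    have "eps powr (- real_of_int (bg + 1)) \<le> eps powr (real_of_int (l' - l) + (- real_of_int bf))"
      using ib eps1 by (intro powr_mono') auto
    also have "\<dots> = eps powr (real_of_int (l' - l)) * eps powr (- real_of_int bf)" by (rule powr_add)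
    also have "\<dots> \<le> eps powr (real_of_int (l' - l)) * w f" using wf by (intro mult_left_mono) auto
    finally show ?thesis using wg by simp
  qed
  define Ls where "Ls = lev ` Ce"
  define xs where "xs = rev [Min Ls..Max Ls]"
  define S where "S = foldl (greedy_step M) {} xs"
  have Sdef: "combined_matching eps C c w E M = S"
    unfolding S_def xs_def Ls_def combined_matching_def lev_def Ce_def Let_def by simp
  have FB: "finite S \<and> S \<subseteq> \<Union> (M ` set xs) \<and>
     (\<forall>l. (\<forall>k\<in>set xs. l \<le> k) \<longrightarrow>
        (\<Sum>k\<in>set xs. wt w (M k)) \<le> (\<Sum>f\<in>S. coef eps (lev f - l) * w f))"
    unfolding S_def
  proof (rule fold_bound[OF eps1 finM disjM])
    show "\<And>l e. e \<in> M l \<Longrightarrow> card e = 2" using card2E ME by blast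
    show "\<And>l e. e \<in> M l \<Longrightarrow> lev e = l" using MLE LE_lev by blast
    show "\<And>l e. e \<in> M l \<Longrightarrow> 0 \<le> w e"
    proof -
      fix l e assume "e \<in> M l"
      then have "1 \<le> w e" using ME wE by blast
      then show "0 \<le> w e" by simp
    qed
    show "\<And>l l' g f. l < l' \<Longrightarrow> g \<in> M l \<Longrightarrow> f \<in> M l' \<Longrightarrow> w g \<le> eps powr real_of_int (l' - l) * w f"
      by (rule wb)
    show "sorted_wrt (>) xs" unfolding xs_def by (simp add: sorted_wrt_rev)
  qed
  have FB2: "S \<subseteq> \<Union> (M ` set xs)" using FB by (elim conjE)
  have FB3: "(\<Sum>k\<in>set xs. wt w (M k)) \<le> (\<Sum>f\<in>S. coef eps (lev f - Min Ls) * w f)"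
    if "Ce \<noteq> {}"
  proof -
    have "finite Ls" "Ls \<noteq> {}" using that CeE finE finite_subset unfolding Ls_def by auto
    then have "\<forall>k\<in>set xs. Min Ls \<le> k" unfolding xs_def by simp
    then show ?thesis using FB by blast
  qed
  have SE: "S \<subseteq> E" using FB2 ME by blast
  have wS: "\<And>f. f \<in> S \<Longrightarrow> 0 \<le> w f"
  proof -
    fix f assume "f \<in> S"
    then have "1 \<le> w f" using SE wE by blast
    then show "0 \<le> w f" by simp
  qed
  have wS0: "0 \<le> wt w S" unfolding wt_def using wS by (simp add: sum_nonneg)
  have MoptCe: "Mopt \<subseteq> Ce" using assms(9) unfolding Ce_def max_weight_matching_def matching_def by auto
  show ?thesis
  proof (cases "Ce = {}")
    case True
    then have "Mopt = {}" using MoptCe by auto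
    then show ?thesis using wS0 eps1 unfolding Sdef wt_def by simp
  next
    case False
    have finCe: "finite Ce" using CeE finE finite_subset by blast
    have finLs: "finite Ls" "Ls \<noteq> {}" using finCe False unfolding Ls_def by auto
    have setxs: "set xs = {Min Ls..Max Ls}" unfolding xs_def by simp
    have Lsub: "Ls \<subseteq> {Min Ls..Max Ls}" using finLs by auto
    have finMopt: "finite Mopt" using MoptCe finCe finite_subset by blast
    have "wt w Mopt = (\<Sum>l\<in>{Min Ls..Max Ls}. wt w {e\<in>Mopt. lev e = l})"
      unfolding wt_def
    proof (rule sum.group[symmetric])
      show "finite Mopt" by (rule finMopt)
      show "finite {Min Ls..Max Ls}" by simp
      have "lev ` Mopt \<subseteq> Ls" using MoptCe unfolding Ls_def by blast
      then show "lev ` Mopt \<subseteq> {Min Ls..Max Ls}" using Lsub by blast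
    qed
    also have "\<dots> \<le> (\<Sum>l\<in>{Min Ls..Max Ls}. (1 + eps) * wt w (M l))"
    proof (rule sum_mono)
      fix l
      obtain Mo where Mo: "max_weight_matching w (LE l) Mo" "wt w (M l) \<ge> wt w Mo / (1 + eps)"
        using apx[of l] unfolding approx_max_weight_matching_def by blast
      have "matching (LE l) {e\<in>Mopt. lev e = l}"
        using assms(9) Ce_LE MoptCe unfolding max_weight_matching_def matching_def by auto
      then have "wt w {e\<in>Mopt. lev e = l} \<le> wt w Mo" using Mo(1) unfolding max_weight_matching_def by blast
      also have "\<dots> \<le> (1 + eps) * wt w (M l)" using Mo(2) eps1 by (simp add: field_simps)
      finally show "wt w {e\<in>Mopt. lev e = l} \<le> (1 + eps) * wt w (M l)" .
    qed
    also have "\<dots> = (1 + eps) * (\<Sum>k\<in>set xs. wt w (M k))" by (simp add: setxs sum_distrib_left)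
    also have "\<dots> \<le> (1 + eps) * (\<Sum>f\<in>S. coef eps (lev f - Min Ls) * w f)"
      using FB3[OF False] eps1 by (intro mult_left_mono) auto
    also have "\<dots> \<le> (1 + eps) * (\<Sum>f\<in>S. (1 + 2*eps/(1-eps)) * w f)"
      using eps1 wS coef_le[OF eps1] by (intro mult_left_mono sum_mono mult_right_mono) auto
    also have "\<dots> = ((1 + eps) * (1 + 2*eps/(1-eps))) * wt w S"
      unfolding wt_def by (simp add: sum_distrib_left mult.assoc)
    also have "\<dots> \<le> (1 + 7 * eps) * wt w S"
    proof (rule mult_right_mono[OF _ wS0])
      have "(1 + eps) * (1 + 2*eps/(1-eps)) = (1+eps)*(1+eps)/(1-eps)" using eps1 by (simp add: field_simps)
      also have "\<dots> \<le> 1 + 7 * eps" using eps1 epsh by (simp add: field_simps)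
      finally show "(1 + eps) * (1 + 2*eps/(1-eps)) \<le> 1 + 7 * eps" .
    qed
    finally show ?thesis unfolding Sdef .
  qed
qed

end
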